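(* Let $\Gamma$ be a countable amenable group and $\alpha\colon\Gamma\curvearrowright X$ an action on a compact, Hausdorff, $0$-dimensional space. Then $b\in T(\alpha)$ is an order unit if and only if $\mu(b)>0$ for every $\mu\in\mathcal M(\alpha)$.
   Context: Clopen type semigroup: let $Y = X\times\mathbb N$, and let $\tilde\Gamma=\Gamma\times\mathfrak S$ ($\mathfrak S$ the permutation group of $\mathbb N$) act on $Y$ by $(\gamma,\sigma)(x,n)=(\alpha(\gamma)x,\sigma(n))$. A clopen $A\subseteq Y$ is bounded if $A\cap(X\times\{n\})=\emptyset$ for all large $n$. Bounded clopen $A,B$ are equidecomposable if there are clopen $A_1,\dots,A_n$ and $\tilde\gamma_i\in\tilde\Gamma$ with $A=\bigsqcup_i A_i$, $B=\bigsqcup_i\tilde\gamma_iA_i$. $T(\alpha)$ is the set of classes $[A]$, with $[A]+[B]=[A'\sqcup B']$ for disjoint representatives; $0=[\emptyset]$. $a\le b$ iff $b=a+c$ for some $c$. $b$ is an order unit if for each $a$ there is $k$ with $a\le kb$. A state is a monoid homomorphism $T(\alpha)\to[0,+\infty]$; $\mathcal M(\alpha)$ is the set of states $\mu$ with $\mu([X\times\{0\}])=1$ (these correspond to $\alpha$-invariant Radon probability measures on $X$). *)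

theory Defs
  imports "HOL-Analysis.Analysis"
begin

definition amenable_group :: "'g::group_add itself \<Rightarrow> bool" where
  "amenable_group _ \<longleftrightarrow>
     (\<forall>F::'g set. finite F \<longrightarrow> (\<forall>\<epsilon>::real. \<epsilon> > 0 \<longrightarrow>
        (\<exists>K::'g set. finite K \<and> K \<noteq> {} \<and>
           (\<forall>g\<in>F. real (card ((((+) g) ` K - K) \<union> (K - ((+) g) ` K))) < \<epsilon> * real (card K)))))"

definition group_action :: "('g::group_add \<Rightarrow> 'x::topological_space \<Rightarrow> 'x) \<Rightarrow> bool" where
  "group_action \<alpha> \<longleftrightarrow> \<alpha> 0 = id \<and> (\<forall>g h. \<alpha> (g + h) = \<alpha> g \<circ> \<alpha> h)
     \<and> (\<forall>g. continuous_on UNIV (\<alpha> g))"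

definition zero_dimensional :: "'x::topological_space itself \<Rightarrow> bool" where
  "zero_dimensional _ \<longleftrightarrow>
     (\<forall>(U::'x set) x. open U \<and> x \<in> U \<longrightarrow> (\<exists>C. open C \<and> closed C \<and> x \<in> C \<and> C \<subseteq> U))"

definition bclopen :: "('x::topological_space \<times> nat) set \<Rightarrow> bool" where
  "bclopen A \<longleftrightarrow> open A \<and> closed A \<and> (\<exists>N. \<forall>n\<ge>N. \<forall>x. (x, n) \<notin> A)"

definition tact :: "('g \<Rightarrow> 'x \<Rightarrow> 'x) \<Rightarrow> 'g \<Rightarrow> (nat \<Rightarrow> nat) \<Rightarrow> 'x \<times> nat \<Rightarrow> 'x \<times> nat" where
  "tact \<alpha> g \<sigma> p = (\<alpha> g (fst p), \<sigma> (snd p))"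

definition equidec :: "('g \<Rightarrow> 'x::topological_space \<Rightarrow> 'x) \<Rightarrow> ('x \<times> nat) set \<Rightarrow> ('x \<times> nat) set \<Rightarrow> bool" where
  "equidec \<alpha> A B \<longleftrightarrow>
     (\<exists>(n::nat) (P::nat \<Rightarrow> ('x \<times> nat) set) (gs::nat \<Rightarrow> 'g) (\<sigma>s::nat \<Rightarrow> nat \<Rightarrow> nat).
        (\<forall>i<n. open (P i) \<and> closed (P i) \<and> bij (\<sigma>s i))
      \<and> disjoint_family_on P {..<n} \<and> A = (\<Union>i<n. P i)
      \<and> disjoint_family_on (\<lambda>i. tact \<alpha> (gs i) (\<sigma>s i) ` P i) {..<n}
      \<and> B = (\<Union>i<n. tact \<alpha> (gs i) (\<sigma>s i) ` P i))"

definition tcls :: "('g \<Rightarrow> 'x::topological_space \<Rightarrow> 'x) \<Rightarrow> ('x \<times> nat) set \<Rightarrow> ('x \<times> nat) set set" where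
  "tcls \<alpha> A = {B. bclopen B \<and> equidec \<alpha> A B}"

definition Tsg :: "('g \<Rightarrow> 'x::topological_space \<Rightarrow> 'x) \<Rightarrow> ('x \<times> nat) set set set" where
  "Tsg \<alpha> = {tcls \<alpha> A | A. bclopen A}"

definition tzero :: "('g \<Rightarrow> 'x::topological_space \<Rightarrow> 'x) \<Rightarrow> ('x \<times> nat) set set" where
  "tzero \<alpha> = tcls \<alpha> {}"

definition tadd :: "('g \<Rightarrow> 'x::topological_space \<Rightarrow> 'x) \<Rightarrow> ('x \<times> nat) set set \<Rightarrow> ('x \<times> nat) set set \<Rightarrow> ('x \<times> nat) set set" where
  "tadd \<alpha> a b = tcls \<alpha> (SOME C. \<exists>A B. A \<in> a \<and> B \<in> b \<and> A \<inter> B = {} \<and> C = A \<union> B)"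

definition tmul :: "('g \<Rightarrow> 'x::topological_space \<Rightarrow> 'x) \<Rightarrow> nat \<Rightarrow> ('x \<times> nat) set set \<Rightarrow> ('x \<times> nat) set set" where
  "tmul \<alpha> k b = (tadd \<alpha> b ^^ k) (tzero \<alpha>)"

definition tle :: "('g \<Rightarrow> 'x::topological_space \<Rightarrow> 'x) \<Rightarrow> ('x \<times> nat) set set \<Rightarrow> ('x \<times> nat) set set \<Rightarrow> bool" where
  "tle \<alpha> a b \<longleftrightarrow> (\<exists>c\<in>Tsg \<alpha>. b = tadd \<alpha> a c)"

definition order_unit :: "('g \<Rightarrow> 'x::topological_space \<Rightarrow> 'x) \<Rightarrow> ('x \<times> nat) set set \<Rightarrow> bool" where
  "order_unit \<alpha> b \<longleftrightarrow> b \<in> Tsg \<alpha> \<and> (\<forall>a\<in>Tsg \<alpha>. \<exists>k. tle \<alpha> a (tmul \<alpha> k b))"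

text \<open>States: monoid homomorphisms T(alpha) \<rightarrow> [0,+\<infinity>] (only values on T(alpha) matter).\<close>
definition tstate :: "('g \<Rightarrow> 'x::topological_space \<Rightarrow> 'x) \<Rightarrow> (('x \<times> nat) set set \<Rightarrow> ennreal) \<Rightarrow> bool" where
  "tstate \<alpha> \<mu> \<longleftrightarrow> \<mu> (tzero \<alpha>) = 0 \<and>
     (\<forall>a\<in>Tsg \<alpha>. \<forall>b\<in>Tsg \<alpha>. \<mu> (tadd \<alpha> a b) = \<mu> a + \<mu> b)"

definition Mstates :: "('g \<Rightarrow> 'x::topological_space \<Rightarrow> 'x) \<Rightarrow> (('x \<times> nat) set set \<Rightarrow> ennreal) set" where
  "Mstates \<alpha> = {\<mu>. tstate \<alpha> \<mu> \<and> \<mu> (tcls \<alpha> (UNIV \<times> {0})) = 1}"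

end

theory Submission
  imports Defs
begin



lemma ga_zero: "group_action \<alpha> \<Longrightarrow> \<alpha> 0 x = x"
  by (simp add: group_action_def)
lemma ga_add: "group_action \<alpha> \<Longrightarrow> \<alpha> (g + h) x = \<alpha> g (\<alpha> h x)"
  by (simp add: group_action_def)
lemma ga_cont: "group_action \<alpha> \<Longrightarrow> continuous_on UNIV (\<alpha> g)"
  by (simp add: group_action_def)
lemma ga_inv1: "group_action \<alpha> \<Longrightarrow> \<alpha> (-g) (\<alpha> g x) = x"
  by (metis ga_add ga_zero left_minus)
lemma ga_inv2: "group_action \<alpha> \<Longrightarrow> \<alpha> g (\<alpha> (-g) x) = x"
  by (metis ga_add ga_zero right_minus)

lemma tact_simp [simp]: "tact \<alpha> g \<sigma> (x, n) = (\<alpha> g x, \<sigma> n)"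
  by (simp add: tact_def)

lemma tact_comp: "group_action \<alpha> \<Longrightarrow> tact \<alpha> g' \<sigma>' (tact \<alpha> g \<sigma> p) = tact \<alpha> (g' + g) (\<sigma>' \<circ> \<sigma>) p"
  by (simp add: tact_def ga_add)

lemma tact_inv1: "group_action \<alpha> \<Longrightarrow> bij \<sigma> \<Longrightarrow> tact \<alpha> (-g) (inv \<sigma>) (tact \<alpha> g \<sigma> p) = p"
  by (cases p) (simp add: ga_inv1 bij_is_inj)
lemma tact_inv2: "group_action \<alpha> \<Longrightarrow> bij \<sigma> \<Longrightarrow> tact \<alpha> g \<sigma> (tact \<alpha> (-g) (inv \<sigma>) p) = p"
  by (cases p) (simp add: ga_inv2 bij_is_surj surj_f_inv_f)

lemma tact_inj: "group_action \<alpha> \<Longrightarrow> bij \<sigma> \<Longrightarrow> inj (tact \<alpha> g \<sigma>)"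
  by (metis injI tact_inv1)

lemma tact_cont:
  fixes \<alpha> :: "'g::group_add \<Rightarrow> 'x::topological_space \<Rightarrow> 'x"
  assumes ga: "group_action \<alpha>" shows "continuous_on UNIV (tact \<alpha> g \<sigma>)"
proof -
  have "tact \<alpha> g \<sigma> = (\<lambda>p. (\<alpha> g (fst p), \<sigma> (snd p)))" by (auto simp: tact_def)
  moreover have "continuous_on UNIV (\<lambda>p::'x\<times>nat. (\<alpha> g (fst p), \<sigma> (snd p)))"
  proof (rule continuous_on_Pair)
    have c1: "continuous_on UNIV (\<lambda>p::'x\<times>nat. fst p)" by (rule continuous_on_fst[OF continuous_on_id])
    show "continuous_on UNIV (\<lambda>p::'x\<times>nat. \<alpha> g (fst p))"
      by (rule continuous_on_compose2[OF ga_cont[OF ga] c1]) simp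
    have c2: "continuous_on UNIV (\<lambda>p::'x\<times>nat. snd p)" by (rule continuous_on_snd[OF continuous_on_id])
    show "continuous_on UNIV (\<lambda>p::'x\<times>nat. \<sigma> (snd p))"
      by (rule continuous_on_compose2[OF Topological_Spaces.continuous_on_discrete[of UNIV \<sigma>] c2]) simp
  qed
  ultimately show ?thesis by simp
qed

lemma tact_image: assumes "group_action \<alpha>" "bij \<sigma>" shows "tact \<alpha> g \<sigma> ` P = tact \<alpha> (-g) (inv \<sigma>) -` P"
proof (rule set_eqI)
  fix p
  show "p \<in> tact \<alpha> g \<sigma> ` P \<longleftrightarrow> p \<in> tact \<alpha> (-g) (inv \<sigma>) -` P"
  proof
    assume "p \<in> tact \<alpha> g \<sigma> ` P"
    then obtain x where "x \<in> P" "p = tact \<alpha> g \<sigma> x" by blast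
    then show "p \<in> tact \<alpha> (-g) (inv \<sigma>) -` P" using tact_inv1[OF assms] by simp
  next
    assume "p \<in> tact \<alpha> (-g) (inv \<sigma>) -` P"
    then have "tact \<alpha> (-g) (inv \<sigma>) p \<in> P" by simp
    moreover have "p = tact \<alpha> g \<sigma> (tact \<alpha> (-g) (inv \<sigma>) p)" using tact_inv2[OF assms] by simp
    ultimately show "p \<in> tact \<alpha> g \<sigma> ` P" by blast
  qed
qed

lemma open_vimage_UNIV: "continuous_on UNIV f \<Longrightarrow> open P \<Longrightarrow> open (f -` P)"
  using open_vimage by blast
lemma closed_vimage_UNIV: "continuous_on UNIV f \<Longrightarrow> closed P \<Longrightarrow> closed (f -` P)"
  using closed_vimage by blast

lemma tact_open: "group_action \<alpha> \<Longrightarrow> bij \<sigma> \<Longrightarrow> open P \<Longrightarrow> open (tact \<alpha> g \<sigma> ` P)"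
  by (simp add: tact_image open_vimage_UNIV tact_cont)
lemma tact_closed: "group_action \<alpha> \<Longrightarrow> bij \<sigma> \<Longrightarrow> closed P \<Longrightarrow> closed (tact \<alpha> g \<sigma> ` P)"
  by (simp add: tact_image closed_vimage_UNIV tact_cont)

lemma bnd_iff: "(\<exists>N. \<forall>n\<ge>N. \<forall>x. (x, n) \<notin> A) \<longleftrightarrow> finite (snd ` (A :: ('x \<times> nat) set))"
proof
  assume "\<exists>N. \<forall>n\<ge>N. \<forall>x. (x, n) \<notin> A"
  then obtain N where "\<forall>n\<ge>N. \<forall>x. (x, n) \<notin> A" by blast
  then have "snd ` A \<subseteq> {..<N}"
  proof (intro subsetI)
    fix n assume H: "\<forall>n\<ge>N. \<forall>x. (x, n) \<notin> A" and "n \<in> snd ` A"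
    then obtain p where "p \<in> A" "n = snd p" by blast
    then have "(fst p, n) \<in> A" by simp
    show "n \<in> {..<N}"
    proof (rule ccontr)
      assume "n \<notin> {..<N}" then have "N \<le> n" by simp
      then show False using H \<open>(fst p, n) \<in> A\<close> by blast
    qed
  qed
  then show "finite (snd ` A)" using finite_subset by blast
next
  assume "finite (snd ` A)"
  then obtain N where "snd ` A \<subseteq> {..<N}" using finite_nat_bounded by blast
  then have "\<forall>n\<ge>N. \<forall>x. (x, n) \<notin> A"
    by (metis image_eqI lessThan_iff not_le snd_conv subsetD)
  then show "\<exists>N. \<forall>n\<ge>N. \<forall>x. (x, n) \<notin> A" by blast
qed

lemma bclopen_iff: "bclopen A \<longleftrightarrow> open A \<and> closed A \<and> finite (snd ` A)"
  by (simp add: bclopen_def bnd_iff)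




lemma finite_subcover_enum:
  fixes U :: "'i \<Rightarrow> 'a::topological_space set"
  assumes "compact A" "\<And>i. i\<in>I \<Longrightarrow> open (U i)" "A \<subseteq> \<Union>(U ` I)"
  obtains n :: nat and e where "\<And>i. i<n \<Longrightarrow> e i \<in> I" "A \<subseteq> (\<Union>i<n. U (e i))"
proof -
  obtain C where C: "C \<subseteq> I" "finite C" "A \<subseteq> (\<Union>c\<in>C. U c)"
    using compactE_image[OF assms(1), of I U] assms by blast
  obtain h where h: "bij_betw h {0..<card C} C" using ex_bij_betw_nat_finite[OF C(2)] by blast
  have 1: "\<And>i. i < card C \<Longrightarrow> h i \<in> I" using h C(1) by (auto simp: bij_betw_def)
  have 2: "A \<subseteq> (\<Union>i<card C. U (h i))"
  proof
    fix x assume "x \<in> A"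
    then obtain c where "c \<in> C" "x \<in> U c" using C(3) by blast
    then have "c \<in> h ` {0..<card C}" using h by (simp add: bij_betw_def)
    then obtain i where "i < card C" "h i = c" by auto
    then show "x \<in> (\<Union>i<card C. U (h i))" using \<open>x \<in> U c\<close> by blast
  qed
  show ?thesis using 1 2 by (rule that)
qed

definition pieces :: "'a set \<Rightarrow> (nat \<Rightarrow> 'a set) \<Rightarrow> nat \<Rightarrow> 'a set" where
  "pieces A V i = A \<inter> V i - (\<Union>j<i. V j)"

lemma pieces_sub: "pieces A V i \<subseteq> A \<inter> V i"
  by (auto simp: pieces_def)

lemma pieces_disj: "disjoint_family_on (pieces A V) S"
  unfolding disjoint_family_on_def
proof (intro ballI impI)
  fix m n :: nat assume "m \<noteq> n"
  have *: "pieces A V i \<inter> pieces A V j = {}" if "i < j" for i j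
    using that unfolding pieces_def by auto
  show "pieces A V m \<inter> pieces A V n = {}"
  proof (cases "m < n")
    case True then show ?thesis using * by blast
  next
    case False then have "n < m" using \<open>m \<noteq> n\<close> by simp
    then show ?thesis using *[of n m] by blast
  qed
qed

lemma pieces_cover:
  assumes "A \<subseteq> (\<Union>i<n. V i)" shows "A = (\<Union>i<n. pieces A V i)"
proof
  show "A \<subseteq> (\<Union>i<n. pieces A V i)"
  proof
    fix x assume x: "x \<in> A"
    then obtain i where i: "i < n" "x \<in> V i" using assms by blast
    define k where "k = (LEAST k. x \<in> V k)"
    have k: "x \<in> V k" unfolding k_def by (rule LeastI[of _ i]) (rule i(2))
    have "k \<le> i" unfolding k_def by (rule Least_le) (rule i(2))
    have "\<And>j. j < k \<Longrightarrow> x \<notin> V j" unfolding k_def using not_less_Least by blast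
    then have "x \<in> pieces A V k" using x k by (auto simp: pieces_def)
    then show "x \<in> (\<Union>i<n. pieces A V i)" using \<open>k \<le> i\<close> i(1) by auto
  qed
qed (auto simp: pieces_def)

lemma pieces_open:
  assumes "open A" "\<And>j. j \<le> i \<Longrightarrow> open (V j)" "\<And>j. j \<le> i \<Longrightarrow> closed (V j)"
  shows "open (pieces A V i)"
  unfolding pieces_def using assms by (intro open_Diff open_Int closed_UN) auto

lemma pieces_closed:
  assumes "closed A" "\<And>j. j \<le> i \<Longrightarrow> open (V j)" "\<And>j. j \<le> i \<Longrightarrow> closed (V j)"
  shows "closed (pieces A V i)"
  unfolding pieces_def using assms by (intro closed_Diff closed_Int open_UN) auto

definition pw :: "('g::group_add \<Rightarrow> 'x::topological_space \<Rightarrow> 'x) \<Rightarrow> ('x \<times> nat) set \<Rightarrow> ('x \<times> nat) set \<Rightarrow> ('x \<times> nat \<Rightarrow> 'x \<times> nat) \<Rightarrow> bool" where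
  "pw \<alpha> A B f \<longleftrightarrow> bij_betw f A B \<and>
     (\<forall>p\<in>A. \<exists>g \<sigma> U. bij \<sigma> \<and> open U \<and> closed U \<and> p \<in> U \<and> (\<forall>q\<in>U\<inter>A. f q = tact \<alpha> g \<sigma> q))"

lemma pw_refl: "group_action \<alpha> \<Longrightarrow> pw \<alpha> A A id"
  unfolding pw_def
  by (auto intro!: exI[of _ 0] exI[of _ id] exI[of _ UNIV] simp: tact_def ga_zero)

lemma pw_sym:
  assumes ga: "group_action \<alpha>" and A: "open A" "closed A" and f: "pw \<alpha> A B f"
  shows "pw \<alpha> B A (inv_into A f)"
  unfolding pw_def
proof (intro conjI ballI)
  have bf: "bij_betw f A B" using f by (simp add: pw_def)
  then show "bij_betw (inv_into A f) B A" by (rule bij_betw_inv_into)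
  fix q assume q: "q \<in> B"
  define p where "p = inv_into A f q"
  have pA: "p \<in> A" and fp: "f p = q" using bf q unfolding p_def bij_betw_def
    by (auto simp: inv_into_into f_inv_into_f)
  obtain g \<sigma> U where U: "bij \<sigma>" "open U" "closed U" "p \<in> U" "\<forall>q\<in>U\<inter>A. f q = tact \<alpha> g \<sigma> q"
    using f pA unfolding pw_def by blast
  define V where "V = tact \<alpha> g \<sigma> ` (U \<inter> A)"
  have "open V" unfolding V_def using U A ga by (intro tact_open) auto
  moreover have "closed V" unfolding V_def using U A ga by (intro tact_closed) auto
  moreover have "q \<in> V" unfolding V_def using U pA fp by (metis IntI image_eqI)
  moreover have "\<forall>q'\<in>V\<inter>B. inv_into A f q' = tact \<alpha> (-g) (inv \<sigma>) q'"
  proof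
    fix q' assume "q' \<in> V \<inter> B"
    then obtain u where u: "u \<in> U \<inter> A" "q' = tact \<alpha> g \<sigma> u" unfolding V_def by blast
    then have "f u = q'" using U by auto
    then have "inv_into A f q' = u" using bf u by (metis IntD2 bij_betw_inv_into_left)
    then show "inv_into A f q' = tact \<alpha> (-g) (inv \<sigma>) q'" using u tact_inv1[OF ga U(1)] by simp
  qed
  moreover have "bij (inv \<sigma>)" using U(1) by (rule bij_imp_bij_inv)
  ultimately show "\<exists>g \<sigma> U. bij \<sigma> \<and> open U \<and> closed U \<and> q \<in> U \<and> (\<forall>q\<in>U\<inter>B. inv_into A f q = tact \<alpha> g \<sigma> q)"
    by (intro exI[of _ "-g"] exI[of _ "inv \<sigma>"] exI[of _ V]) simp
qed

lemma pw_trans: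
  assumes ga: "group_action \<alpha>" and f: "pw \<alpha> A B f" and h: "pw \<alpha> B C h"
  shows "pw \<alpha> A C (h \<circ> f)"
  unfolding pw_def
proof (intro conjI ballI)
  have bf: "bij_betw f A B" using f by (simp add: pw_def)
  have bh: "bij_betw h B C" using h by (simp add: pw_def)
  show "bij_betw (h \<circ> f) A C" using bf bh by (rule bij_betw_trans)
  fix p assume pA: "p \<in> A"
  obtain g \<sigma> U where U: "bij \<sigma>" "open U" "closed U" "p \<in> U" "\<forall>q\<in>U\<inter>A. f q = tact \<alpha> g \<sigma> q"
    using f pA unfolding pw_def by blast
  have fpB: "f p \<in> B" using bf pA by (auto simp: bij_betw_def)
  obtain g' \<sigma>' V where V: "bij \<sigma>'" "open V" "closed V" "f p \<in> V" "\<forall>q\<in>V\<inter>B. h q = tact \<alpha> g' \<sigma>' q"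
    using h fpB unfolding pw_def by blast
  define W where "W = U \<inter> tact \<alpha> g \<sigma> -` V"
  have "open W" unfolding W_def using U V by (intro open_Int open_vimage_UNIV tact_cont ga) auto
  moreover have "closed W" unfolding W_def using U V by (intro closed_Int closed_vimage_UNIV tact_cont ga) auto
  moreover have "p \<in> W" unfolding W_def using U V pA by auto
  moreover have "\<forall>q\<in>W\<inter>A. (h \<circ> f) q = tact \<alpha> (g' + g) (\<sigma>' \<circ> \<sigma>) q"
  proof
    fix q assume q: "q \<in> W \<inter> A"
    then have "f q = tact \<alpha> g \<sigma> q" using U unfolding W_def by auto
    moreover have "f q \<in> B" using bf q by (auto simp: bij_betw_def)
    ultimately have "h (f q) = tact \<alpha> g' \<sigma>' (tact \<alpha> g \<sigma> q)" using V q unfolding W_def by auto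
    then show "(h \<circ> f) q = tact \<alpha> (g' + g) (\<sigma>' \<circ> \<sigma>) q" by (simp add: tact_comp[OF ga])
  qed
  moreover have "bij (\<sigma>' \<circ> \<sigma>)" using U V by (simp add: bij_comp)
  ultimately show "\<exists>g \<sigma> U. bij \<sigma> \<and> open U \<and> closed U \<and> p \<in> U \<and> (\<forall>q\<in>U\<inter>A. (h \<circ> f) q = tact \<alpha> g \<sigma> q)"
    by (intro exI[of _ "g' + g"] exI[of _ "\<sigma>' \<circ> \<sigma>"] exI[of _ W]) simp
qed

lemma pw_union:
  assumes f: "pw \<alpha> A B f" and f': "pw \<alpha> A' B' f'"
    and "open A" "closed A" "open A'" "closed A'" "A \<inter> A' = {}" "B \<inter> B' = {}"
  shows "pw \<alpha> (A \<union> A') (B \<union> B') (\<lambda>p. if p \<in> A then f p else f' p)"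
  unfolding pw_def
proof (intro conjI ballI)
  have bf: "bij_betw f A B" using f by (simp add: pw_def)
  have bf': "bij_betw f' A' B'" using f' by (simp add: pw_def)
  have "bij_betw (\<lambda>p. if p \<in> A then f p else f' p) A B"
    using bf by (rule bij_betw_cong[THEN iffD1, rotated]) auto
  moreover have "bij_betw (\<lambda>p. if p \<in> A then f p else f' p) A' B'"
    using bf' by (rule bij_betw_cong[THEN iffD1, rotated]) (use assms(7) in auto)
  ultimately show "bij_betw (\<lambda>p. if p \<in> A then f p else f' p) (A \<union> A') (B \<union> B')"
    using assms(8) by (intro bij_betw_combine)
  fix p assume p: "p \<in> A \<union> A'"
  show "\<exists>g \<sigma> U. bij \<sigma> \<and> open U \<and> closed U \<and> p \<in> U \<and>
          (\<forall>q\<in>U \<inter> (A \<union> A'). (if q \<in> A then f q else f' q) = tact \<alpha> g \<sigma> q)"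
  proof (cases "p \<in> A")
    case True
    obtain g \<sigma> U where U: "bij \<sigma>" "open U" "closed U" "p \<in> U" "\<forall>q\<in>U\<inter>A. f q = tact \<alpha> g \<sigma> q"
      using f True unfolding pw_def by blast
    show ?thesis using U True assms(3,4)
      by (intro exI[of _ g] exI[of _ \<sigma>] exI[of _ "U \<inter> A"]) auto
  next
    case False
    then have pA': "p \<in> A'" using p by auto
    obtain g \<sigma> U where U: "bij \<sigma>" "open U" "closed U" "p \<in> U" "\<forall>q\<in>U\<inter>A'. f' q = tact \<alpha> g \<sigma> q"
      using f' pA' unfolding pw_def by blast
    show ?thesis using U pA' assms(5,6,7)
      by (intro exI[of _ g] exI[of _ \<sigma>] exI[of _ "U \<inter> A'"]) auto
  qed
qed




lemma equidec_pw:
  assumes ga: "group_action \<alpha>" and e: "equidec \<alpha> A B"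
  shows "\<exists>f. pw \<alpha> A B f"
proof -
  obtain n :: nat and P gs \<sigma>s where H0: "(\<forall>i<n. open (P i) \<and> closed (P i) \<and> bij (\<sigma>s i))
      \<and> disjoint_family_on P {..<n} \<and> A = (\<Union>i<n. P i)
      \<and> disjoint_family_on (\<lambda>i. tact \<alpha> (gs i) (\<sigma>s i) ` P i) {..<n}
      \<and> B = (\<Union>i<n. tact \<alpha> (gs i) (\<sigma>s i) ` P i)"
    using e unfolding equidec_def by iprover
  note H = H0[THEN conjunct1] H0[THEN conjunct2, THEN conjunct1] H0[THEN conjunct2, THEN conjunct2, THEN conjunct1]
    H0[THEN conjunct2, THEN conjunct2, THEN conjunct2, THEN conjunct1] H0[THEN conjunct2, THEN conjunct2, THEN conjunct2, THEN conjunct2]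
  define idx where "idx p = (SOME i. i < n \<and> p \<in> P i)" for p
  define f where "f p = tact \<alpha> (gs (idx p)) (\<sigma>s (idx p)) p" for p
  have idx: "idx p = i" if "i < n" "p \<in> P i" for i p
  proof -
    have *: "idx p < n \<and> p \<in> P (idx p)" unfolding idx_def by (rule someI[of _ i]) (use that in simp)
    show ?thesis
    proof (rule ccontr)
      assume "idx p \<noteq> i"
      then have "P (idx p) \<inter> P i = {}" using H(2) * that unfolding disjoint_family_on_def by simp
      then show False using * that by blast
    qed
  qed
  have fP: "f p = tact \<alpha> (gs i) (\<sigma>s i) p" if "i < n" "p \<in> P i" for i p
    using idx[OF that] f_def by simp
  have inj: "inj_on f A"
  proof (rule inj_onI)
    fix p q assume "p \<in> A" "q \<in> A" and fpq: "f p = f q"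
    then obtain i j where ij: "i < n" "p \<in> P i" "j < n" "q \<in> P j" using H(3) by blast
    have "f p \<in> tact \<alpha> (gs i) (\<sigma>s i) ` P i" using fP[OF ij(1,2)] ij(2) by simp
    moreover have "f p \<in> tact \<alpha> (gs j) (\<sigma>s j) ` P j" using fP[OF ij(3,4)] ij(4) fpq by simp
    ultimately have "i = j" using H(4) ij(1,3) unfolding disjoint_family_on_def by blast
    then have "tact \<alpha> (gs i) (\<sigma>s i) p = tact \<alpha> (gs i) (\<sigma>s i) q"
      using fP[OF ij(1,2)] fP[OF ij(3,4)] fpq by simp
    moreover have "inj (tact \<alpha> (gs i) (\<sigma>s i))" using tact_inj[OF ga] H(1) ij(1) by simp
    ultimately show "p = q" by (simp add: inj_eq)
  qed
  have fPi: "f ` P i = tact \<alpha> (gs i) (\<sigma>s i) ` P i" if "i < n" for i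
    by (rule image_cong) (simp_all add: fP[OF that])
  have img: "f ` A = B"
  proof -
    have "f ` A = (\<Union>i<n. f ` P i)" using H(3) by (simp add: image_UN)
    also have "\<dots> = (\<Union>i<n. tact \<alpha> (gs i) (\<sigma>s i) ` P i)" using fPi by simp
    finally show ?thesis using H(5) by simp
  qed
  have "pw \<alpha> A B f" unfolding pw_def
  proof (intro conjI ballI)
    show "bij_betw f A B" using inj img by (simp add: bij_betw_def)
    fix p assume "p \<in> A"
    then obtain i where i: "i < n" "p \<in> P i" using H(3) by blast
    have "\<forall>q\<in>P i \<inter> A. f q = tact \<alpha> (gs i) (\<sigma>s i) q" using fP i(1) by blast
    moreover have "bij (\<sigma>s i)" "open (P i)" "closed (P i)" using H(1) i(1) by auto
    ultimately show "\<exists>g \<sigma> U. bij \<sigma> \<and> open U \<and> closed U \<and> p \<in> U \<and> (\<forall>q\<in>U\<inter>A. f q = tact \<alpha> g \<sigma> q)"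
      using i(2) by blast
  qed
  then show ?thesis by blast
qed

lemma compact_bclopen:
  assumes X: "compact (UNIV :: 'x::topological_space set)" and A: "bclopen (A :: ('x \<times> nat) set)"
  shows "compact A"
proof -
  obtain N where N: "snd ` A \<subseteq> {..<N}" using A finite_nat_bounded by (auto simp: bclopen_iff)
  have "compact ((UNIV :: 'x set) \<times> {..<N})" using compact_Times[OF X finite_imp_compact[OF finite_lessThan]] by simp
  then have "compact (((UNIV :: 'x set) \<times> {..<N}) \<inter> A)" using A by (intro compact_Int_closed) (auto simp: bclopen_def)
  moreover have "((UNIV :: 'x set) \<times> {..<N}) \<inter> A = A" using N by force
  ultimately show ?thesis by simp
qed

lemma pw_equidec:
  assumes ga: "group_action \<alpha>" and X: "compact (UNIV :: 'x::topological_space set)"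
    and A: "bclopen (A :: ('x \<times> nat) set)" and f: "pw \<alpha> A B f"
  shows "equidec \<alpha> A B"
proof -
  have bf: "bij_betw f A B" using f by (simp add: pw_def)
  have "\<forall>p\<in>A. \<exists>g \<sigma> U. bij \<sigma> \<and> open U \<and> closed U \<and> p \<in> U \<and> (\<forall>q\<in>U\<inter>A. f q = tact \<alpha> g \<sigma> q)"
    using f unfolding pw_def by blast
  then obtain G S U where c: "\<And>p. p \<in> A \<Longrightarrow> bij (S p) \<and> open (U p) \<and> closed (U p)
      \<and> p \<in> U p \<and> (\<forall>q\<in>U p\<inter>A. f q = tact \<alpha> (G p) (S p) q)"
    by metis
  have cA: "compact A" using X A by (rule compact_bclopen)
  have Uo: "\<And>p. p \<in> A \<Longrightarrow> open (U p)" and Uc: "\<And>p. p \<in> A \<Longrightarrow> closed (U p)"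
    and Um: "\<And>p. p \<in> A \<Longrightarrow> p \<in> U p"
    and Uf: "\<And>p q. p \<in> A \<Longrightarrow> q \<in> U p \<inter> A \<Longrightarrow> f q = tact \<alpha> (G p) (S p) q"
    and Sb: "\<And>p. p \<in> A \<Longrightarrow> bij (S p)"
    using c by auto
  have Ucov: "A \<subseteq> \<Union>(U ` A)" using Um by blast
  obtain n :: nat and e where e: "\<And>i. i<n \<Longrightarrow> e i \<in> A" "A \<subseteq> (\<Union>i<n. U (e i))"
    using finite_subcover_enum[OF cA Uo Ucov] by blast
  define P where "P = pieces A (\<lambda>i. U (e i))"
  have Popen: "open (P i)" if "i < n" for i
    unfolding P_def
  proof (rule pieces_open)
    show "open A" using A by (simp add: bclopen_def)
    fix j assume "j \<le> i" then have "e j \<in> A" using e(1) that by simp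
    then show "open (U (e j))" "closed (U (e j))" using Uo Uc by auto
  qed
  have Pclosed: "closed (P i)" if "i < n" for i
    unfolding P_def
  proof (rule pieces_closed)
    show "closed A" using A by (simp add: bclopen_def)
    fix j assume "j \<le> i" then have "e j \<in> A" using e(1) that by simp
    then show "open (U (e j))" "closed (U (e j))" using Uo Uc by auto
  qed
  have Pdisj: "disjoint_family_on P {..<n}" unfolding P_def by (rule pieces_disj)
  have Pcov: "A = (\<Union>i<n. P i)" unfolding P_def using e(2) by (rule pieces_cover)
  have PA: "P i \<subseteq> A \<inter> U (e i)" for i unfolding P_def by (rule pieces_sub)
  have fP: "tact \<alpha> (G (e i)) (S (e i)) ` P i = f ` P i" if "i < n" for i
  proof (rule image_cong[OF refl])
    fix q assume "q \<in> P i"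
    then have "q \<in> U (e i) \<inter> A" using PA by blast
    then show "tact \<alpha> (G (e i)) (S (e i)) q = f q" using Uf[OF e(1)[OF that]] by simp
  qed
  have inj: "inj_on f A" using bf by (simp add: bij_betw_def)
  show ?thesis unfolding equidec_def
  proof (intro exI[of _ n] exI[of _ P] exI[of _ "\<lambda>i. G (e i)"] exI[of _ "\<lambda>i. S (e i)"] conjI allI impI)
    fix i assume "i < n" then show "open (P i)" "closed (P i)" "bij (S (e i))"
      using Popen Pclosed Sb e(1) by auto
  next
    show "disjoint_family_on P {..<n}" by (rule Pdisj)
    show "A = (\<Union>i<n. P i)" by (rule Pcov)
    show "disjoint_family_on (\<lambda>i. tact \<alpha> (G (e i)) (S (e i)) ` P i) {..<n}"
      unfolding disjoint_family_on_def
    proof (intro ballI impI)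
      fix i j assume ij: "i \<in> {..<n}" "j \<in> {..<n}" "i \<noteq> j"
      have "f ` P i \<inter> f ` P j = f ` (P i \<inter> P j)" using inj PA by (intro inj_on_image_Int[symmetric]) auto
      also have "\<dots> = {}" using Pdisj ij unfolding disjoint_family_on_def by auto
      finally show "tact \<alpha> (G (e i)) (S (e i)) ` P i \<inter> tact \<alpha> (G (e j)) (S (e j)) ` P j = {}"
        using fP ij by auto
    qed
    have "B = f ` A" using bf by (simp add: bij_betw_def)
    also have "\<dots> = (\<Union>i<n. f ` P i)" using Pcov by auto
    finally show "B = (\<Union>i<n. tact \<alpha> (G (e i)) (S (e i)) ` P i)" using fP by auto
  qed
qed

lemma equidec_bclopen:
  assumes ga: "group_action \<alpha>" and A: "bclopen A" and e: "equidec \<alpha> A B"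
  shows "bclopen B"
proof -
  obtain n :: nat and P gs \<sigma>s where H: "\<forall>i<n. open (P i) \<and> closed (P i) \<and> bij (\<sigma>s i)"
      "A = (\<Union>i<n. P i)"
      "B = (\<Union>i<n. tact \<alpha> (gs i) (\<sigma>s i) ` P i)"
    using e unfolding equidec_def by blast
  have "open B" unfolding H(3) using H(1) ga by (intro open_UN ballI tact_open) auto
  moreover have "closed B" unfolding H(3) using H(1) ga by (intro closed_UN ballI tact_closed) auto
  moreover have "finite (snd ` B)"
  proof -
    have "snd ` B = (\<Union>i<n. \<sigma>s i ` snd ` P i)" unfolding H(3) by (force simp: image_iff tact_def)
    moreover have "finite (snd ` P i)" if "i < n" for i
    proof -
      have "snd ` P i \<subseteq> snd ` A" using H(2) that by auto
      then show ?thesis using A finite_subset by (auto simp: bclopen_iff)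
    qed
    ultimately show ?thesis by auto
  qed
  ultimately show ?thesis by (simp add: bclopen_iff)
qed




definition tr :: "nat \<Rightarrow> nat \<Rightarrow> nat \<Rightarrow> nat" where
  "tr a b n = (if n = a then b else if n = b then a else n)"

lemma tr_bij: "bij (tr a b)"
proof -
  have "tr a b \<circ> tr a b = id" by (auto simp: tr_def fun_eq_iff)
  then show ?thesis by (metis o_bij)
qed

lemma tr_a [simp]: "tr a b a = b" by (simp add: tr_def)

lemma open_level: "open ((UNIV :: 'x::topological_space set) \<times> {n::nat})"
  by (intro open_Times open_UNIV) (simp add: open_discrete)
lemma closed_level: "closed ((UNIV :: 'x::topological_space set) \<times> {n::nat})"
  by (intro closed_Times closed_UNIV) simp

definition sh :: "nat \<Rightarrow> ('x \<times> nat) set \<Rightarrow> ('x \<times> nat) set" where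
  "sh k A = (\<lambda>p. (fst p, snd p + k)) ` A"

lemma snd_sh: "snd ` sh k A = (\<lambda>n. n + k) ` snd ` A"
  unfolding sh_def by (simp add: image_image)

lemma bclopen_Un: "bclopen A \<Longrightarrow> bclopen B \<Longrightarrow> bclopen (A \<union> B)"
  by (auto simp: bclopen_iff image_Un)

locale tsetting =
  fixes \<alpha> :: "'g::group_add \<Rightarrow> 'x::topological_space \<Rightarrow> 'x"
  assumes ga: "group_action \<alpha>" and cX: "compact (UNIV :: 'x set)"
begin

lemma ed_iff: "bclopen A \<Longrightarrow> equidec \<alpha> A B \<longleftrightarrow> (\<exists>f. pw \<alpha> A B f)"
  using equidec_pw[OF ga] pw_equidec[OF ga cX] by blast

lemma ed_bclopen: "bclopen A \<Longrightarrow> equidec \<alpha> A B \<Longrightarrow> bclopen B"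
  using equidec_bclopen[OF ga] by blast

lemma ed_refl: "bclopen A \<Longrightarrow> equidec \<alpha> A A"
  using ed_iff pw_refl[OF ga] by blast

lemma ed_sym: assumes "bclopen A" "equidec \<alpha> A B" shows "equidec \<alpha> B A"
proof -
  obtain f where "pw \<alpha> A B f" using assms ed_iff by blast
  then have "pw \<alpha> B A (inv_into A f)" using pw_sym[OF ga] assms(1) by (auto simp: bclopen_def)
  then show ?thesis using ed_iff ed_bclopen assms by blast
qed

lemma ed_trans: assumes "bclopen A" "equidec \<alpha> A B" "equidec \<alpha> B C" shows "equidec \<alpha> A C"
proof -
  have B: "bclopen B" using ed_bclopen assms by blast
  obtain f where "pw \<alpha> A B f" using assms ed_iff by blast
  moreover obtain h where "pw \<alpha> B C h" using assms B ed_iff by blast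
  ultimately have "pw \<alpha> A C (h \<circ> f)" by (rule pw_trans[OF ga])
  then show ?thesis using ed_iff assms by blast
qed

lemma ed_union:
  assumes "bclopen A" "bclopen A'" "A \<inter> A' = {}" "equidec \<alpha> A B" "equidec \<alpha> A' B'" "B \<inter> B' = {}"
  shows "equidec \<alpha> (A \<union> A') (B \<union> B')"
proof -
  obtain f where f: "pw \<alpha> A B f" using assms ed_iff by blast
  obtain f' where f': "pw \<alpha> A' B' f'" using assms ed_iff by blast
  have "pw \<alpha> (A \<union> A') (B \<union> B') (\<lambda>p. if p \<in> A then f p else f' p)"
    using pw_union[OF f f'] assms by (auto simp: bclopen_def)
  moreover have "bclopen (A \<union> A')" using assms(1,2) by (rule bclopen_Un)
  ultimately show ?thesis using ed_iff by blast
qed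

lemma tcls_self: "bclopen A \<Longrightarrow> A \<in> tcls \<alpha> A"
  by (simp add: tcls_def ed_refl)

lemma tcls_mem: "B \<in> tcls \<alpha> A \<longleftrightarrow> bclopen B \<and> equidec \<alpha> A B"
  by (simp add: tcls_def)

lemma tcls_eq: assumes "bclopen A" "equidec \<alpha> A A'" shows "tcls \<alpha> A' = tcls \<alpha> A"
proof -
  have A': "bclopen A'" using ed_bclopen assms by blast
  have "equidec \<alpha> A' B \<longleftrightarrow> equidec \<alpha> A B" if "bclopen B" for B
    using ed_trans[OF A' ed_sym[OF assms]] ed_trans[OF assms(1) assms(2)] by blast
  then show ?thesis unfolding tcls_def by blast
qed

lemma tcls_mem_eq: "bclopen A \<Longrightarrow> B \<in> tcls \<alpha> A \<Longrightarrow> tcls \<alpha> B = tcls \<alpha> A"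
  using tcls_eq tcls_mem by blast

lemma tcls_Tsg: "bclopen A \<Longrightarrow> tcls \<alpha> A \<in> Tsg \<alpha>"
  unfolding Tsg_def by blast

lemma tadd_eq:
  assumes A0: "bclopen A0" and B0: "bclopen B0" and A: "A \<in> tcls \<alpha> A0" and B: "B \<in> tcls \<alpha> B0"
    and AB: "A \<inter> B = {}"
  shows "tadd \<alpha> (tcls \<alpha> A0) (tcls \<alpha> B0) = tcls \<alpha> (A \<union> B)"
proof -
  define C where "C = (SOME C. \<exists>A B. A \<in> tcls \<alpha> A0 \<and> B \<in> tcls \<alpha> B0 \<and> A \<inter> B = {} \<and> C = A \<union> B)"
  have "\<exists>A' B'. A' \<in> tcls \<alpha> A0 \<and> B' \<in> tcls \<alpha> B0 \<and> A' \<inter> B' = {} \<and> C = A' \<union> B'"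
    unfolding C_def by (rule someI_ex) (use A B AB in blast)
  then obtain A' B' where A': "A' \<in> tcls \<alpha> A0" and B': "B' \<in> tcls \<alpha> B0" and AB': "A' \<inter> B' = {}"
    and C: "C = A' \<union> B'" by blast
  have bA: "bclopen A" and bB: "bclopen B" using A B tcls_mem by auto
  have "equidec \<alpha> A A'" using ed_trans[OF bA ed_sym[OF A0] ] A A' tcls_mem by blast
  moreover have "equidec \<alpha> B B'" using ed_trans[OF bB ed_sym[OF B0] ] B B' tcls_mem by blast
  ultimately have "equidec \<alpha> (A \<union> B) (A' \<union> B')" using ed_union[OF bA bB AB] AB' by blast
  moreover have "bclopen (A \<union> B)" using bA bB by (rule bclopen_Un)
  ultimately have "tcls \<alpha> (A' \<union> B') = tcls \<alpha> (A \<union> B)" by (rule tcls_eq[rotated])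
  then show ?thesis unfolding tadd_def C_def[symmetric] C by simp
qed

lemma sh_pw: "pw \<alpha> A (sh k A) (\<lambda>p. (fst p, snd p + k))"
  unfolding pw_def
proof (intro conjI ballI)
  show "bij_betw (\<lambda>p. (fst p, snd p + k)) A (sh k A)"
    unfolding sh_def by (rule inj_on_imp_bij_betw) (auto simp: inj_on_def prod_eq_iff)
  fix p assume "p \<in> A"
  have "\<forall>q\<in>(UNIV \<times> {snd p}) \<inter> A. (fst q, snd q + k) = tact \<alpha> 0 (tr (snd p) (snd p + k)) q"
    by (auto simp: tact_def ga_zero[OF ga])
  then show "\<exists>g \<sigma> U. bij \<sigma> \<and> open U \<and> closed U \<and> p \<in> U \<and> (\<forall>q\<in>U \<inter> A. (fst q, snd q + k) = tact \<alpha> g \<sigma> q)"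
    using tr_bij open_level closed_level by (intro exI[of _ 0] exI[of _ "tr (snd p) (snd p + k)"] exI[of _ "UNIV \<times> {snd p}"]) (auto simp: mem_Times_iff)
qed

lemma sh_ed: "bclopen A \<Longrightarrow> equidec \<alpha> A (sh k A)"
  using sh_pw ed_iff by blast

lemma sh_bclopen: assumes "bclopen (A :: ('x \<times> nat) set)" shows "bclopen (sh k A)"
  using ed_bclopen[OF assms sh_ed[OF assms, of k]] .

lemma sh_tcls: "bclopen A \<Longrightarrow> sh k A \<in> tcls \<alpha> A"
  using sh_ed sh_bclopen tcls_mem by blast

end




lemma bclopen_empty: "bclopen {}"
  by (simp add: bclopen_iff)

lemma bclopen_level: "bclopen ((UNIV :: 'x::topological_space set) \<times> {0::nat})"
  by (simp add: bclopen_iff open_level closed_level)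

context tsetting begin

definition Dk :: "('x \<times> nat) set \<Rightarrow> nat \<Rightarrow> nat \<Rightarrow> ('x \<times> nat) set" where
  "Dk B0 L k = (\<Union>j<k. sh (j * L) B0)"

lemma tmul_Suc: "tmul \<alpha> (Suc k) b = tadd \<alpha> b (tmul \<alpha> k b)"
  by (simp add: tmul_def)

lemma tmul_0: "tmul \<alpha> 0 b = tzero \<alpha>"
  by (simp add: tmul_def)

lemma Dk_props:
  assumes B0: "bclopen B0" and L: "snd ` B0 \<subseteq> {..<L}"
  shows "bclopen (Dk B0 L k) \<and> snd ` Dk B0 L k \<subseteq> {..<k * L} \<and> tmul \<alpha> k (tcls \<alpha> B0) = tcls \<alpha> (Dk B0 L k)"
proof (induction k)
  case 0
  show ?case by (simp add: Dk_def tmul_0 tzero_def bclopen_empty)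
next
  case (Suc k)
  have D: "bclopen (Dk B0 L k)" and DL: "snd ` Dk B0 L k \<subseteq> {..<k * L}"
    and T: "tmul \<alpha> k (tcls \<alpha> B0) = tcls \<alpha> (Dk B0 L k)" using Suc.IH by auto
  have S: "bclopen (sh (k * L) B0)" using sh_bclopen[OF B0] .
  have SL: "snd ` sh (k * L) B0 \<subseteq> {k * L..<Suc k * L}" using L unfolding snd_sh by auto
  have disj: "sh (k * L) B0 \<inter> Dk B0 L k = {}"
  proof (rule ccontr)
    assume "sh (k * L) B0 \<inter> Dk B0 L k \<noteq> {}"
    then obtain p where "p \<in> sh (k * L) B0" "p \<in> Dk B0 L k" by blast
    then have "snd p \<ge> k * L" "snd p < k * L" using SL DL by force+
    then show False by simp
  qed
  have eq: "Dk B0 L (Suc k) = sh (k * L) B0 \<union> Dk B0 L k" by (simp add: Dk_def lessThan_Suc Un_commute)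
  have "tmul \<alpha> (Suc k) (tcls \<alpha> B0) = tadd \<alpha> (tcls \<alpha> B0) (tcls \<alpha> (Dk B0 L k))"
    by (simp add: tmul_Suc T)
  also have "\<dots> = tcls \<alpha> (sh (k * L) B0 \<union> Dk B0 L k)"
    by (rule tadd_eq[OF B0 D sh_tcls[OF B0] tcls_self[OF D] disj])
  finally have 1: "tmul \<alpha> (Suc k) (tcls \<alpha> B0) = tcls \<alpha> (Dk B0 L (Suc k))" using eq by simp
  have 2: "bclopen (Dk B0 L (Suc k))" using eq bclopen_Un[OF S D] by simp
  have 3: "snd ` Dk B0 L (Suc k) \<subseteq> {..<Suc k * L}" using eq SL DL by (auto simp: image_Un)
  show ?case using 1 2 3 by blast
qed

lemma tmul_Tsg:
  assumes B0: "bclopen B0" shows "tmul \<alpha> k (tcls \<alpha> B0) \<in> Tsg \<alpha>"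
proof -
  obtain L where L: "snd ` B0 \<subseteq> {..<L}" using B0 finite_nat_bounded by (auto simp: bclopen_iff)
  then show ?thesis using Dk_props[OF B0 L, of k] tcls_Tsg by auto
qed

lemma state_tmul:
  assumes B0: "bclopen B0" and mu: "tstate \<alpha> \<mu>"
  shows "\<mu> (tmul \<alpha> k (tcls \<alpha> B0)) = of_nat k * \<mu> (tcls \<alpha> B0)"
proof (induction k)
  case 0
  then show ?case using mu by (simp add: tmul_0 tstate_def)
next
  case (Suc k)
  have "\<mu> (tmul \<alpha> (Suc k) (tcls \<alpha> B0)) = \<mu> (tcls \<alpha> B0) + \<mu> (tmul \<alpha> k (tcls \<alpha> B0))"
    using mu tcls_Tsg[OF B0] tmul_Tsg[OF B0] by (simp add: tmul_Suc tstate_def)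
  then show ?case using Suc.IH by (simp add: algebra_simps)
qed

lemma ou_pos:
  assumes B0: "bclopen B0" and ou: "order_unit \<alpha> (tcls \<alpha> B0)" and mu: "\<mu> \<in> Mstates \<alpha>"
  shows "\<mu> (tcls \<alpha> B0) > 0"
proof (rule ccontr)
  assume "\<not> \<mu> (tcls \<alpha> B0) > 0"
  then have z: "\<mu> (tcls \<alpha> B0) = 0" by simp
  have st: "tstate \<alpha> \<mu>" and one: "\<mu> (tcls \<alpha> (UNIV \<times> {0})) = 1" using mu by (auto simp: Mstates_def)
  have uT: "tcls \<alpha> (UNIV \<times> {0}) \<in> Tsg \<alpha>" using tcls_Tsg[OF bclopen_level] .
  obtain k where "tle \<alpha> (tcls \<alpha> (UNIV \<times> {0})) (tmul \<alpha> k (tcls \<alpha> B0))"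
    using ou uT unfolding order_unit_def by blast
  then obtain c where c: "c \<in> Tsg \<alpha>" "tmul \<alpha> k (tcls \<alpha> B0) = tadd \<alpha> (tcls \<alpha> (UNIV \<times> {0})) c"
    unfolding tle_def by blast
  have "\<mu> (tmul \<alpha> k (tcls \<alpha> B0)) = 1 + \<mu> c" using st uT c one by (simp add: tstate_def)
  moreover have "\<mu> (tmul \<alpha> k (tcls \<alpha> B0)) = 0" using state_tmul[OF B0 st] z by simp
  ultimately show False by simp
qed

end



lemma divmod_unique:
  fixes s s' t t' L :: nat
  assumes "s < L" "s' < L" "s + t * L = s' + t' * L"
  shows "s = s' \<and> t = t'"
proof -
  have "(s + t * L) div L = t" "(s + t * L) mod L = s" using assms(1) by auto
  moreover have "(s' + t' * L) div L = t'" "(s' + t' * L) mod L = s'" using assms(2) by auto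
  ultimately show ?thesis using assms(3) by metis
qed

lemma bclopen_Diff:
  assumes "bclopen D" "bclopen A" shows "bclopen (D - A)"
proof -
  have "snd ` (D - A) \<subseteq> snd ` D" by auto
  then show ?thesis using assms finite_subset by (auto simp: bclopen_iff intro: open_Diff closed_Diff)
qed

context tsetting begin

lemma cover_ou:
  assumes B0: "bclopen B0" and cov: "\<forall>x. \<exists>g n. (\<alpha> g x, n) \<in> B0"
  shows "order_unit \<alpha> (tcls \<alpha> B0)"
  unfolding order_unit_def
proof (intro conjI ballI)
  show "tcls \<alpha> B0 \<in> Tsg \<alpha>" by (rule tcls_Tsg[OF B0])
  obtain L where L: "snd ` B0 \<subseteq> {..<L}" using B0 finite_nat_bounded by (auto simp: bclopen_iff)
  define W where "W gn = (\<lambda>x. (\<alpha> (fst gn) x, snd gn)) -` B0" for gn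
  have Wcont: "continuous_on UNIV (\<lambda>x. (\<alpha> (fst gn) x, snd gn))" for gn
    using ga_cont[OF ga] by (intro continuous_on_Pair continuous_on_const) auto
  have Wo: "open (W gn)" for gn
    unfolding W_def using B0 Wcont by (intro open_vimage_UNIV) (auto simp: bclopen_def)
  have Wc: "closed (W gn)" for gn
    unfolding W_def using B0 Wcont by (intro closed_vimage_UNIV) (auto simp: bclopen_def)
  have Wcov: "UNIV \<subseteq> \<Union>(W ` UNIV)" using cov unfolding W_def by force
  have Wo': "\<And>i. i \<in> UNIV \<Longrightarrow> open (W i)" using Wo by blast
  have "\<exists>(r::nat) e. UNIV \<subseteq> (\<Union>i<r. W (e i))"
  proof (rule finite_subcover_enum[OF cX Wo' Wcov])
    fix r :: nat and e assume "UNIV \<subseteq> (\<Union>i<r. W (e i))"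
    then show ?thesis by blast
  qed
  then obtain r :: nat and e where e: "UNIV \<subseteq> (\<Union>i<r. W (e i))" by blast
  define idx where "idx x = (LEAST i. x \<in> W (e i))" for x
  have idx1: "idx x < r \<and> x \<in> W (e (idx x))" for x
  proof -
    have "x \<in> (\<Union>i<r. W (e i))" using e by blast
    then obtain i where i: "i < r" "x \<in> W (e i)" by blast
    have 1: "x \<in> W (e (idx x))" unfolding idx_def by (rule LeastI[of _ i]) (rule i(2))
    have "idx x \<le> i" unfolding idx_def by (rule Least_le) (rule i(2))
    then have "idx x < r" using i(1) by linarith
    then show ?thesis using 1 by blast
  qed
  have idx2: "j < idx x \<Longrightarrow> x \<notin> W (e j)" for x j
    unfolding idx_def using not_less_Least by blast
  have idx3: "idx x = i" if "x \<in> W (e i)" "\<And>j. j < i \<Longrightarrow> x \<notin> W (e j)" for x i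
    unfolding idx_def
  proof (rule Least_equality)
    show "x \<in> W (e i)" by (rule that(1))
    fix y assume "x \<in> W (e y)" then show "i \<le> y" using that(2) not_less by blast
  qed
  define G where "G x = fst (e (idx x))" for x
  define s where "s x = snd (e (idx x))" for x
  have inB: "(\<alpha> (G x) x, s x) \<in> B0" for x using idx1[of x] unfolding W_def G_def s_def by simp
  have sL: "s x < L" for x
  proof -
    have "s x \<in> snd ` B0" using inB[of x] by (metis image_eqI snd_conv)
    then show ?thesis using L by blast
  qed
  fix a assume "a \<in> Tsg \<alpha>"
  then obtain A0 where A0: "bclopen A0" and a: "a = tcls \<alpha> A0" unfolding Tsg_def by blast
  obtain M where M: "snd ` A0 \<subseteq> {..<M}" using A0 finite_nat_bounded by (auto simp: bclopen_iff)
  define f where "f p = (\<alpha> (G (fst p)) (fst p), s (fst p) + (snd p * r + idx (fst p)) * L)" for p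
  define A' where "A' = f ` A0"
  have inj: "inj_on f A0"
  proof (rule inj_onI)
    fix p q assume "p \<in> A0" "q \<in> A0" and fpq: "f p = f q"
    then have lev: "s (fst p) + (snd p * r + idx (fst p)) * L = s (fst q) + (snd q * r + idx (fst q)) * L"
      and pt: "\<alpha> (G (fst p)) (fst p) = \<alpha> (G (fst q)) (fst q)" unfolding f_def by auto
    have "snd p * r + idx (fst p) = snd q * r + idx (fst q)" using divmod_unique[OF sL sL lev] by simp
    then have "idx (fst p) + snd p * r = idx (fst q) + snd q * r" by simp
    then have ii: "idx (fst p) = idx (fst q) \<and> snd p = snd q"
      using divmod_unique[of "idx (fst p)" r "idx (fst q)" "snd p" "snd q"] idx1[of "fst p"] idx1[of "fst q"] by simp
    then have "G (fst p) = G (fst q)" unfolding G_def by simp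
    then have "\<alpha> (- G (fst p)) (\<alpha> (G (fst p)) (fst p)) = \<alpha> (- G (fst p)) (\<alpha> (G (fst p)) (fst q))"
      using pt by simp
    then have "fst p = fst q" by (simp add: ga_inv1[OF ga])
    then show "p = q" using ii by (simp add: prod_eq_iff)
  qed
  have "pw \<alpha> A0 A' f" unfolding pw_def
  proof (intro conjI ballI)
    show "bij_betw f A0 A'" unfolding A'_def using inj by (simp add: bij_betw_def)
    fix p assume "p \<in> A0"
    define i where "i = idx (fst p)"
    define U where "U = pieces UNIV (\<lambda>j. W (e j)) i \<times> {snd p}"
    define v where "v = s (fst p) + (snd p * r + i) * L"
    have "open (pieces UNIV (\<lambda>j. W (e j)) i)" using Wo Wc by (intro pieces_open) auto
    then have Uo: "open U" unfolding U_def by (intro open_Times) (auto simp: open_discrete)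
    have "closed (pieces UNIV (\<lambda>j. W (e j)) i)" using Wo Wc by (intro pieces_closed) auto
    then have Uc: "closed U" unfolding U_def by (intro closed_Times) auto
    have pU: "p \<in> U" unfolding U_def pieces_def i_def using idx1 idx2 by (auto simp: mem_Times_iff)
    have "\<forall>q\<in>U \<inter> A0. f q = tact \<alpha> (G (fst p)) (tr (snd p) v) q"
    proof
      fix q assume "q \<in> U \<inter> A0"
      then have q1: "fst q \<in> W (e i)" "\<And>j. j < i \<Longrightarrow> fst q \<notin> W (e j)" "snd q = snd p"
        unfolding U_def pieces_def by (auto simp: mem_Times_iff)
      have "idx (fst q) = i" using idx3[OF q1(1)] q1(2) by blast
      then show "f q = tact \<alpha> (G (fst p)) (tr (snd p) v) q"
        unfolding f_def v_def tact_def G_def s_def i_def using q1(3) by simp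
    qed
    then show "\<exists>g \<sigma> U. bij \<sigma> \<and> open U \<and> closed U \<and> p \<in> U \<and> (\<forall>q\<in>U \<inter> A0. f q = tact \<alpha> g \<sigma> q)"
      using tr_bij Uo Uc pU by blast
  qed
  then have edA: "equidec \<alpha> A0 A'" using ed_iff[OF A0] by blast
  have bA': "bclopen A'" using ed_bclopen[OF A0 edA] .
  have A'cls: "A' \<in> tcls \<alpha> A0" using edA bA' tcls_mem by blast
  define D where "D = Dk B0 L (M * r)"
  have Dp: "bclopen D" "tmul \<alpha> (M * r) (tcls \<alpha> B0) = tcls \<alpha> D"
    using Dk_props[OF B0 L, of "M * r"] unfolding D_def by auto
  have sub: "A' \<subseteq> D"
  proof
    fix y assume "y \<in> A'"
    then obtain p where p: "p \<in> A0" "y = f p" unfolding A'_def by blast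
    have "snd p < M" using M p(1) by force
    moreover have "idx (fst p) < r" using idx1 by blast
    ultimately have t: "snd p * r + idx (fst p) < M * r"
    proof -
      assume a1: "snd p < M" and a2: "idx (fst p) < r"
      have "(snd p + 1) * r \<le> M * r" using a1 by (intro mult_le_mono1) simp
      then show ?thesis using a2 by simp
    qed
    have "y \<in> sh ((snd p * r + idx (fst p)) * L) B0"
      unfolding sh_def p(2) f_def by (rule image_eqI[OF _ inB[of "fst p"]]) simp
    then show "y \<in> D" unfolding D_def Dk_def using t by blast
  qed
  define C where "C = D - A'"
  have bC: "bclopen C" unfolding C_def by (rule bclopen_Diff[OF Dp(1) bA'])
  have "tadd \<alpha> (tcls \<alpha> A0) (tcls \<alpha> C) = tcls \<alpha> (A' \<union> C)"
    by (rule tadd_eq[OF A0 bC A'cls tcls_self[OF bC]]) (auto simp: C_def)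
  also have "A' \<union> C = D" unfolding C_def using sub by blast
  finally have "tmul \<alpha> (M * r) (tcls \<alpha> B0) = tadd \<alpha> a (tcls \<alpha> C)" using Dp(2) a by simp
  then show "\<exists>k. tle \<alpha> a (tmul \<alpha> k (tcls \<alpha> B0))"
    unfolding tle_def using tcls_Tsg[OF bC] by blast
qed

end



lemma compact_unit_cube: "compact {f :: 'a \<Rightarrow> real. \<forall>x. f x \<in> {0..1}}"
proof -
  have "compactin (product_topology (\<lambda>_. euclidean) UNIV) (PiE UNIV (\<lambda>_::'a. {0..1::real}))"
    by (subst compactin_PiE) auto
  then have "compact (PiE UNIV (\<lambda>_::'a. {0..1::real}))"
    by (simp add: euclidean_product_topology)
  moreover have "PiE UNIV (\<lambda>_::'a. {0..1::real}) = {f. \<forall>x. f x \<in> {0..1}}"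
    by (auto simp: PiE_UNIV_domain)
  ultimately show ?thesis by simp
qed

lemma cluster_fun:
  fixes s :: "nat \<Rightarrow> 'a \<Rightarrow> real"
  assumes "\<And>n C. s n C \<in> {0..1}"
  obtains \<nu> where "\<And>C. \<nu> C \<in> {0..1}" "inf (nhds \<nu>) (filtermap s sequentially) \<noteq> bot"
proof -
  have "filtermap s sequentially \<noteq> bot" by (simp add: filtermap_bot_iff)
  moreover have "eventually (\<lambda>f. f \<in> {f :: 'a \<Rightarrow> real. \<forall>x. f x \<in> {0..1}}) (filtermap s sequentially)"
    using assms by (simp add: eventually_filtermap)
  ultimately obtain \<nu> where "\<nu> \<in> {f :: 'a \<Rightarrow> real. \<forall>x. f x \<in> {0..1}}" "inf (nhds \<nu>) (filtermap s sequentially) \<noteq> bot"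
    using compact_unit_cube[unfolded compact_filter] by blast
  then show ?thesis using that by blast
qed

lemma cluster_transfer:
  fixes \<phi> :: "('a \<Rightarrow> real) \<Rightarrow> real"
  assumes cont: "continuous_on UNIV \<phi>" and cl: "inf (nhds \<nu>) (filtermap s sequentially) \<noteq> bot"
    and ev: "\<And>e. e > 0 \<Longrightarrow> eventually (\<lambda>n. \<bar>\<phi> (s n)\<bar> < e) sequentially"
  shows "\<phi> \<nu> = 0"
proof (rule ccontr)
  assume ne: "\<phi> \<nu> \<noteq> 0"
  define d where "d = \<bar>\<phi> \<nu>\<bar> / 2"
  have d: "d > 0" using ne by (simp add: d_def)
  have "(\<phi> \<longlongrightarrow> \<phi> \<nu>) (at \<nu> within UNIV)" using cont by (simp add: continuous_on_def)
  then have "(\<phi> \<longlongrightarrow> \<phi> \<nu>) (nhds \<nu>)" by (simp add: tendsto_at_iff_tendsto_nhds)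
  then have e1: "eventually (\<lambda>f. dist (\<phi> f) (\<phi> \<nu>) < d) (nhds \<nu>)" using d by (simp add: tendsto_iff)
  have e2: "eventually (\<lambda>f. \<bar>\<phi> f\<bar> < d) (filtermap s sequentially)"
    using ev[OF d] by (simp add: eventually_filtermap)
  have "eventually (\<lambda>f. False) (inf (nhds \<nu>) (filtermap s sequentially))"
    unfolding eventually_inf
  proof (intro exI conjI)
    show "eventually (\<lambda>f. dist (\<phi> f) (\<phi> \<nu>) < d) (nhds \<nu>)" by (rule e1)
    show "eventually (\<lambda>f. \<bar>\<phi> f\<bar> < d) (filtermap s sequentially)" by (rule e2)
    show "\<forall>x. dist (\<phi> x) (\<phi> \<nu>) < d \<and> \<bar>\<phi> x\<bar> < d \<longrightarrow> False"
      unfolding d_def dist_real_def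
    proof (intro allI impI)
      fix x assume "\<bar>\<phi> x - \<phi> \<nu>\<bar> < \<bar>\<phi> \<nu>\<bar> / 2 \<and> \<bar>\<phi> x\<bar> < \<bar>\<phi> \<nu>\<bar> / 2"
      moreover have "\<bar>\<phi> \<nu>\<bar> \<le> \<bar>\<phi> x - \<phi> \<nu>\<bar> + \<bar>\<phi> x\<bar>" by linarith
      ultimately show False by linarith
    qed
  qed
  then show False using cl by (simp add: eventually_False)
qed




lemma card_filter_diff:
  assumes "finite K" "finite K'"
  shows "\<bar>real (card {k\<in>K'. Q k}) - real (card {k\<in>K. Q k})\<bar> \<le> real (card ((K' - K) \<union> (K - K')))"
proof -
  have fin: "finite ((K' - K) \<union> (K - K'))" using assms by auto
  have "card {k\<in>K'. Q k} \<le> card ({k\<in>K. Q k} \<union> (K' - K))"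
    by (rule card_mono) (use assms in auto)
  also have "\<dots> \<le> card {k\<in>K. Q k} + card (K' - K)" by (rule card_Un_le)
  also have "card (K' - K) \<le> card ((K' - K) \<union> (K - K'))" by (rule card_mono[OF fin]) auto
  finally have 1: "card {k\<in>K'. Q k} \<le> card {k\<in>K. Q k} + card ((K' - K) \<union> (K - K'))" by simp
  have "card {k\<in>K. Q k} \<le> card ({k\<in>K'. Q k} \<union> (K - K'))"
    by (rule card_mono) (use assms in auto)
  also have "\<dots> \<le> card {k\<in>K'. Q k} + card (K - K')" by (rule card_Un_le)
  also have "card (K - K') \<le> card ((K' - K) \<union> (K - K'))" by (rule card_mono[OF fin]) auto
  finally have 2: "card {k\<in>K. Q k} \<le> card {k\<in>K'. Q k} + card ((K' - K) \<union> (K - K'))" by simp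
  show ?thesis using 1 2 by linarith
qed

lemma inv_mean:
  fixes \<alpha> :: "'g::{group_add,countable} \<Rightarrow> 'x::topological_space \<Rightarrow> 'x"
  assumes am: "amenable_group TYPE('g)" and ga: "group_action \<alpha>" and zS: "\<And>g. \<alpha> g z \<notin> S"
  obtains \<nu> :: "'x set \<Rightarrow> real" where "\<And>C. \<nu> C \<ge> 0" "\<nu> UNIV = 1"
    "\<And>C D. C \<inter> D = {} \<Longrightarrow> \<nu> (C \<union> D) = \<nu> C + \<nu> D" "\<And>g C. \<nu> (\<alpha> g ` C) = \<nu> C" "\<nu> S = 0"
proof -
  have "\<exists>K::'g set. finite K \<and> K \<noteq> {} \<and> (\<forall>g\<in>from_nat ` {..n}.
      real (card ((((+) g) ` K - K) \<union> (K - ((+) g) ` K))) < (1 / (real n + 1)) * real (card K))" for n :: nat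
  proof -
    have "finite (from_nat ` {..n} :: 'g set)" by simp
    moreover have "(1 / (real n + 1)) > 0" by simp
    ultimately show ?thesis using am unfolding amenable_group_def by blast
  qed
  then obtain K :: "nat \<Rightarrow> 'g set" where K: "\<And>n. finite (K n) \<and> K n \<noteq> {} \<and> (\<forall>g\<in>from_nat ` {..n}.
      real (card ((((+) g) ` K n - K n) \<union> (K n - ((+) g) ` K n))) < (1 / (real n + 1)) * real (card (K n)))"
    by metis
  have Kfin: "finite (K n)" and Kne: "K n \<noteq> {}" for n using K by auto
  have Kpos: "real (card (K n)) > 0" for n using Kfin Kne by (simp add: card_gt_0_iff)
  define s where "s n C = real (card {k\<in>K n. \<alpha> k z \<in> C}) / real (card (K n))" for n C
  have s01: "s n C \<in> {0..1}" for n C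
  proof -
    have "card {k\<in>K n. \<alpha> k z \<in> C} \<le> card (K n)" by (rule card_mono[OF Kfin]) auto
    then show ?thesis unfolding s_def using Kpos[of n] by (auto simp: divide_le_eq_1)
  qed
  obtain \<nu> where \<nu>01: "\<And>C. \<nu> C \<in> {0..1}" and cl: "inf (nhds \<nu>) (filtermap s sequentially) \<noteq> bot"
    using cluster_fun[of s] s01 by blast
  have cont_ev: "continuous_on UNIV (\<lambda>f::'x set \<Rightarrow> real. f C)" for C by simp
  have exact: "\<phi> \<nu> = 0" if "continuous_on UNIV \<phi>" "\<And>n. \<phi> (s n) = 0" for \<phi> :: "('x set \<Rightarrow> real) \<Rightarrow> real"
    using cluster_transfer[OF that(1) cl] that(2) by simp
  show ?thesis
  proof
    fix C show "\<nu> C \<ge> 0" using \<nu>01[of C] by simp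
  next
    have "(\<lambda>f::'x set \<Rightarrow> real. f UNIV - 1) \<nu> = 0"
    proof (rule exact)
      show "continuous_on UNIV (\<lambda>f::'x set \<Rightarrow> real. f UNIV - 1)" by (intro continuous_intros) simp
      fix n show "s n UNIV - 1 = 0" unfolding s_def using Kpos[of n] by simp
    qed
    then show "\<nu> UNIV = 1" by simp
  next
    fix C D :: "'x set" assume CD: "C \<inter> D = {}"
    have "(\<lambda>f::'x set \<Rightarrow> real. f (C \<union> D) - f C - f D) \<nu> = 0"
    proof (rule exact)
      show "continuous_on UNIV (\<lambda>f::'x set \<Rightarrow> real. f (C \<union> D) - f C - f D)" by (intro continuous_intros) simp_all
      fix n
      have "{k\<in>K n. \<alpha> k z \<in> C \<union> D} = {k\<in>K n. \<alpha> k z \<in> C} \<union> {k\<in>K n. \<alpha> k z \<in> D}" by auto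
      moreover have "{k\<in>K n. \<alpha> k z \<in> C} \<inter> {k\<in>K n. \<alpha> k z \<in> D} = {}" using CD by auto
      ultimately have "card {k\<in>K n. \<alpha> k z \<in> C \<union> D} = card {k\<in>K n. \<alpha> k z \<in> C} + card {k\<in>K n. \<alpha> k z \<in> D}"
        using Kfin[of n] by (simp add: card_Un_disjoint)
      then show "s n (C \<union> D) - s n C - s n D = 0" unfolding s_def by (simp add: add_divide_distrib)
    qed
    then show "\<nu> (C \<union> D) = \<nu> C + \<nu> D" by simp
  next
    have "(\<lambda>f::'x set \<Rightarrow> real. f S) \<nu> = 0"
    proof (rule exact)
      show "continuous_on UNIV (\<lambda>f::'x set \<Rightarrow> real. f S)" by simp
      fix n have E: "{k\<in>K n. \<alpha> k z \<in> S} = {}" using zS by auto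
      show "s n S = 0" unfolding s_def E by simp
    qed
    then show "\<nu> S = 0" by simp
  next
    fix g :: 'g and C :: "'x set"
    define h where "h = - g"
    have approx: "\<bar>s n (\<alpha> g ` C) - s n C\<bar> < 1 / (real n + 1)" if hn: "h \<in> from_nat ` {..n}" for n
    proof -
      define Q where "Q k = (\<alpha> k z \<in> C)" for k
      have 1: "{k\<in>K n. \<alpha> k z \<in> \<alpha> g ` C} = {k\<in>K n. Q (h + k)}"
      proof -
        have "\<alpha> k z \<in> \<alpha> g ` C \<longleftrightarrow> Q (h + k)" for k
        proof
          assume "\<alpha> k z \<in> \<alpha> g ` C"
          then obtain c where "c \<in> C" "\<alpha> k z = \<alpha> g c" by blast
          then have "\<alpha> (-g) (\<alpha> k z) = c" using ga_inv1[OF ga] by simp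
          then show "Q (h + k)" using \<open>c \<in> C\<close> unfolding Q_def h_def by (simp add: ga_add[OF ga])
        next
          assume "Q (h + k)"
          then have "\<alpha> (-g) (\<alpha> k z) \<in> C" unfolding Q_def h_def by (simp add: ga_add[OF ga])
          moreover have "\<alpha> k z = \<alpha> g (\<alpha> (-g) (\<alpha> k z))" using ga_inv2[OF ga] by simp
          ultimately show "\<alpha> k z \<in> \<alpha> g ` C" by blast
        qed
        then show ?thesis by blast
      qed
      have 2: "card {k\<in>K n. Q (h + k)} = card {k\<in>((+) h) ` K n. Q k}"
      proof -
        have "((+) h) ` {k\<in>K n. Q (h + k)} = {k\<in>((+) h) ` K n. Q k}" by auto
        moreover have "inj_on ((+) h) {k\<in>K n. Q (h + k)}" by (auto simp: inj_on_def)
        ultimately show ?thesis by (metis card_image)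
      qed
      have 3: "\<bar>real (card {k\<in>((+) h) ` K n. Q k}) - real (card {k\<in>K n. Q k})\<bar>
          \<le> real (card ((((+) h) ` K n - K n) \<union> (K n - ((+) h) ` K n)))"
        by (rule card_filter_diff) (use Kfin in auto)
      have 4: "real (card ((((+) h) ` K n - K n) \<union> (K n - ((+) h) ` K n))) < (1 / (real n + 1)) * real (card (K n))"
        using K[of n] hn by blast
      have "s n (\<alpha> g ` C) - s n C = (real (card {k\<in>((+) h) ` K n. Q k}) - real (card {k\<in>K n. Q k})) / real (card (K n))"
        unfolding s_def 1 unfolding 2 unfolding Q_def by (simp add: diff_divide_distrib)
      then have "\<bar>s n (\<alpha> g ` C) - s n C\<bar> = \<bar>real (card {k\<in>((+) h) ` K n. Q k}) - real (card {k\<in>K n. Q k})\<bar> / real (card (K n))"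
        using Kpos[of n] by simp
      also have "\<dots> < (1 / (real n + 1)) * real (card (K n)) / real (card (K n))"
        using 3 4 Kpos[of n] by (intro divide_strict_right_mono) auto
      also have "\<dots> = 1 / (real n + 1)" using Kpos[of n] by simp
      finally show ?thesis .
    qed
    have "(\<lambda>f::'x set \<Rightarrow> real. f (\<alpha> g ` C) - f C) \<nu> = 0"
    proof (rule cluster_transfer[OF _ cl])
      show "continuous_on UNIV (\<lambda>f::'x set \<Rightarrow> real. f (\<alpha> g ` C) - f C)" by (intro continuous_intros) simp_all
      fix e :: real assume "e > 0"
      then obtain N where N: "inverse (real (Suc N)) < e" using reals_Archimedean by blast
      show "eventually (\<lambda>n. \<bar>s n (\<alpha> g ` C) - s n C\<bar> < e) sequentially"
        unfolding eventually_sequentially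
      proof (intro exI allI impI)
        fix n assume n: "max N (to_nat h) \<le> n"
        then have "h \<in> from_nat ` {..n}" by (metis atMost_iff from_nat_to_nat image_eqI max.bounded_iff)
        then have "\<bar>s n (\<alpha> g ` C) - s n C\<bar> < 1 / (real n + 1)" by (rule approx)
        also have "1 / (real n + 1) \<le> inverse (real (Suc N))"
          using n by (simp add: inverse_eq_divide frac_le)
        finally show "\<bar>s n (\<alpha> g ` C) - s n C\<bar> < e" using N by simp
      qed
    qed
    then show "\<nu> (\<alpha> g ` C) = \<nu> C" by simp
  qed
qed




definition sl :: "nat \<Rightarrow> ('x \<times> nat) set \<Rightarrow> 'x set" where
  "sl n A = {x. (x, n) \<in> A}"

definition val :: "('x set \<Rightarrow> real) \<Rightarrow> ('x \<times> nat) set \<Rightarrow> real" where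
  "val \<nu> A = (\<Sum>n\<in>snd ` A. \<nu> (sl n A))"

locale msetting = tsetting \<alpha> for \<alpha> :: "'g::group_add \<Rightarrow> 'x::topological_space \<Rightarrow> 'x" +
  fixes \<nu> :: "'x set \<Rightarrow> real"
  assumes nn: "\<And>C. \<nu> C \<ge> 0"
    and add: "\<And>C D. C \<inter> D = {} \<Longrightarrow> \<nu> (C \<union> D) = \<nu> C + \<nu> D"
    and inv: "\<And>g C. \<nu> (\<alpha> g ` C) = \<nu> C"
    and one: "\<nu> UNIV = 1"
begin

lemma nu_empty: "\<nu> {} = 0"
  using add[of "{}" "{}"] by simp

lemma nu_mono: "C \<subseteq> D \<Longrightarrow> \<nu> C \<le> \<nu> D"
  using add[of C "D - C"] nn[of "D - C"] by (simp add: Un_absorb1)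

lemma val_extend:
  assumes "finite I" "snd ` A \<subseteq> I"
  shows "val \<nu> A = (\<Sum>n\<in>I. \<nu> (sl n A))"
  unfolding val_def
proof (rule sum.mono_neutral_left[OF assms(1) assms(2)])
  show "\<forall>i\<in>I - snd ` A. \<nu> (sl i A) = 0"
  proof
    fix i assume "i \<in> I - snd ` A"
    then have "sl i A = {}" unfolding sl_def by (force simp: image_iff)
    then show "\<nu> (sl i A) = 0" by (simp add: nu_empty)
  qed
qed

lemma val_nn: "val \<nu> A \<ge> 0"
  unfolding val_def by (intro sum_nonneg nn)

lemma val_union:
  assumes "finite (snd ` A)" "finite (snd ` B)" "A \<inter> B = {}"
  shows "val \<nu> (A \<union> B) = val \<nu> A + val \<nu> B"
proof -
  define I where "I = snd ` A \<union> snd ` B"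
  have fI: "finite I" using assms by (simp add: I_def)
  have "val \<nu> (A \<union> B) = (\<Sum>n\<in>I. \<nu> (sl n (A \<union> B)))" by (rule val_extend[OF fI]) (auto simp: I_def)
  also have "\<dots> = (\<Sum>n\<in>I. \<nu> (sl n A) + \<nu> (sl n B))"
  proof (rule sum.cong[OF refl])
    fix n
    have "sl n (A \<union> B) = sl n A \<union> sl n B" "sl n A \<inter> sl n B = {}" using assms(3) by (auto simp: sl_def)
    then show "\<nu> (sl n (A \<union> B)) = \<nu> (sl n A) + \<nu> (sl n B)" using add by simp
  qed
  also have "\<dots> = (\<Sum>n\<in>I. \<nu> (sl n A)) + (\<Sum>n\<in>I. \<nu> (sl n B))" by (rule sum.distrib)
  also have "(\<Sum>n\<in>I. \<nu> (sl n A)) = val \<nu> A" by (rule val_extend[symmetric, OF fI]) (auto simp: I_def)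
  also have "(\<Sum>n\<in>I. \<nu> (sl n B)) = val \<nu> B" by (rule val_extend[symmetric, OF fI]) (auto simp: I_def)
  finally show ?thesis .
qed

lemma val_UN:
  fixes n :: nat
  assumes "\<And>i. i < n \<Longrightarrow> finite (snd ` P i)" "disjoint_family_on P {..<n}"
  shows "val \<nu> (\<Union>i<n. P i) = (\<Sum>i<n. val \<nu> (P i))"
  using assms
proof (induction n)
  case 0
  then show ?case by (simp add: val_def)
next
  case (Suc n)
  have IH: "val \<nu> (\<Union>i<n. P i) = (\<Sum>i<n. val \<nu> (P i))"
    using Suc.prems by (intro Suc.IH) (auto simp: disjoint_family_on_def)
  have "(\<Union>i<Suc n. P i) = (\<Union>i<n. P i) \<union> P n" by (auto simp: lessThan_Suc)
  moreover have "(\<Union>i<n. P i) \<inter> P n = {}"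
  proof -
    have "P i \<inter> P n = {}" if "i < n" for i
      using Suc.prems(2) that unfolding disjoint_family_on_def by simp
    then show ?thesis by blast
  qed
  moreover have "finite (snd ` (\<Union>i<n. P i))" using Suc.prems(1) by (simp add: image_UN)
  ultimately have "val \<nu> (\<Union>i<Suc n. P i) = val \<nu> (\<Union>i<n. P i) + val \<nu> (P n)"
    using val_union Suc.prems(1) by simp
  then show ?case using IH by simp
qed

lemma val_tact:
  assumes \<sigma>: "bij \<sigma>" and fin: "finite (snd ` P)"
  shows "val \<nu> (tact \<alpha> g \<sigma> ` P) = val \<nu> P"
proof -
  have snd_img: "snd ` (tact \<alpha> g \<sigma> ` P) = \<sigma> ` snd ` P" by (force simp: tact_def image_iff)
  have sl_img: "sl m (tact \<alpha> g \<sigma> ` P) = \<alpha> g ` sl (inv \<sigma> m) P" for m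
  proof
    show "sl m (tact \<alpha> g \<sigma> ` P) \<subseteq> \<alpha> g ` sl (inv \<sigma> m) P"
    proof
      fix y assume "y \<in> sl m (tact \<alpha> g \<sigma> ` P)"
      then obtain p where "p \<in> P" "(y, m) = tact \<alpha> g \<sigma> p" unfolding sl_def by blast
      then have "y = \<alpha> g (fst p)" "m = \<sigma> (snd p)" "p \<in> P" by (auto simp: tact_def)
      then have "inv \<sigma> m = snd p" using \<sigma> by (simp add: bij_is_inj)
      then have "fst p \<in> sl (inv \<sigma> m) P" using \<open>p \<in> P\<close> unfolding sl_def by simp
      then show "y \<in> \<alpha> g ` sl (inv \<sigma> m) P" using \<open>y = \<alpha> g (fst p)\<close> by blast
    qed
    show "\<alpha> g ` sl (inv \<sigma> m) P \<subseteq> sl m (tact \<alpha> g \<sigma> ` P)"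
    proof
      fix y assume "y \<in> \<alpha> g ` sl (inv \<sigma> m) P"
      then obtain x where x: "(x, inv \<sigma> m) \<in> P" "y = \<alpha> g x" unfolding sl_def by blast
      have "\<sigma> (inv \<sigma> m) = m" using \<sigma> by (simp add: bij_is_surj surj_f_inv_f)
      then have "(y, m) = tact \<alpha> g \<sigma> (x, inv \<sigma> m)" using x by simp
      then show "y \<in> sl m (tact \<alpha> g \<sigma> ` P)" unfolding sl_def using x(1) by blast
    qed
  qed
  have "val \<nu> (tact \<alpha> g \<sigma> ` P) = (\<Sum>m\<in>\<sigma> ` snd ` P. \<nu> (\<alpha> g ` sl (inv \<sigma> m) P))"
    unfolding val_def snd_img sl_img ..
  also have "\<dots> = (\<Sum>n\<in>snd ` P. \<nu> (\<alpha> g ` sl (inv \<sigma> (\<sigma> n)) P))"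
    by (rule sum.reindex[unfolded comp_def]) (use \<sigma> in \<open>meson bij_is_inj inj_on_subset subset_UNIV\<close>)
  also have "\<dots> = (\<Sum>n\<in>snd ` P. \<nu> (sl n P))"
    using \<sigma> by (simp add: bij_is_inj inv)
  finally show ?thesis unfolding val_def .
qed

lemma val_equidec:
  assumes A: "bclopen A" and e: "equidec \<alpha> A B"
  shows "val \<nu> B = val \<nu> A"
proof -
  obtain n :: nat and P gs \<sigma>s where H0: "(\<forall>i<n. open (P i) \<and> closed (P i) \<and> bij (\<sigma>s i))
      \<and> disjoint_family_on P {..<n} \<and> A = (\<Union>i<n. P i)
      \<and> disjoint_family_on (\<lambda>i. tact \<alpha> (gs i) (\<sigma>s i) ` P i) {..<n}
      \<and> B = (\<Union>i<n. tact \<alpha> (gs i) (\<sigma>s i) ` P i)"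
    using e unfolding equidec_def by iprover
  note H = H0[THEN conjunct1] H0[THEN conjunct2, THEN conjunct1] H0[THEN conjunct2, THEN conjunct2, THEN conjunct1]
    H0[THEN conjunct2, THEN conjunct2, THEN conjunct2, THEN conjunct1] H0[THEN conjunct2, THEN conjunct2, THEN conjunct2, THEN conjunct2]
  have finP: "finite (snd ` P i)" if "i < n" for i
  proof -
    have "snd ` P i \<subseteq> snd ` A" using H(3) that by auto
    then show ?thesis using A finite_subset by (auto simp: bclopen_iff)
  qed
  have finT: "finite (snd ` (tact \<alpha> (gs i) (\<sigma>s i) ` P i))" if "i < n" for i
  proof -
    have "snd ` (tact \<alpha> (gs i) (\<sigma>s i) ` P i) = \<sigma>s i ` snd ` P i" by (force simp: tact_def image_iff)
    then show ?thesis using finP[OF that] by simp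
  qed
  have "val \<nu> B = (\<Sum>i<n. val \<nu> (tact \<alpha> (gs i) (\<sigma>s i) ` P i))"
    unfolding H(5) by (rule val_UN[OF finT H(4)])
  also have "\<dots> = (\<Sum>i<n. val \<nu> (P i))"
    by (rule sum.cong[OF refl]) (use H(1) finP val_tact in auto)
  also have "\<dots> = val \<nu> A" unfolding H(3) by (rule val_UN[symmetric, OF finP H(2)])
  finally show ?thesis .
qed

definition mu :: "('x \<times> nat) set set \<Rightarrow> ennreal" where
  "mu c = ennreal (val \<nu> (SOME A. A \<in> c))"

lemma mu_tcls: assumes "bclopen A0" shows "mu (tcls \<alpha> A0) = ennreal (val \<nu> A0)"
proof -
  have "(SOME A. A \<in> tcls \<alpha> A0) \<in> tcls \<alpha> A0" by (rule someI[where P="\<lambda>A. A \<in> tcls \<alpha> A0", OF tcls_self[OF assms]])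
  then have "equidec \<alpha> A0 (SOME A. A \<in> tcls \<alpha> A0)" by (simp add: tcls_mem)
  then show ?thesis unfolding mu_def using val_equidec[OF assms] by simp
qed

lemma mu_state: "mu \<in> Mstates \<alpha>"
proof -
  have "mu (tzero \<alpha>) = 0" unfolding tzero_def using mu_tcls[OF bclopen_empty] by (simp add: val_def)
  moreover have "mu (tadd \<alpha> a b) = mu a + mu b" if ab: "a \<in> Tsg \<alpha>" "b \<in> Tsg \<alpha>" for a b
  proof -
    obtain A0 where A0: "bclopen A0" "a = tcls \<alpha> A0" using ab(1) unfolding Tsg_def by blast
    obtain B0 where B0: "bclopen B0" "b = tcls \<alpha> B0" using ab(2) unfolding Tsg_def by blast
    obtain N where N: "snd ` A0 \<subseteq> {..<N}" using A0(1) finite_nat_bounded by (auto simp: bclopen_iff)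
    have disj: "A0 \<inter> sh N B0 = {}"
    proof (rule ccontr)
      assume "A0 \<inter> sh N B0 \<noteq> {}"
      then obtain p where "p \<in> A0" "p \<in> sh N B0" by blast
      then have "snd p < N" "snd p \<ge> N" using N unfolding sh_def by force+
      then show False by simp
    qed
    have S: "bclopen (sh N B0)" by (rule sh_bclopen[OF B0(1)])
    have "tadd \<alpha> a b = tcls \<alpha> (A0 \<union> sh N B0)"
      unfolding A0(2) B0(2) by (rule tadd_eq[OF A0(1) B0(1) tcls_self[OF A0(1)] sh_tcls[OF B0(1)] disj])
    then have "mu (tadd \<alpha> a b) = ennreal (val \<nu> (A0 \<union> sh N B0))" using mu_tcls bclopen_Un[OF A0(1) S] by simp
    also have "\<dots> = ennreal (val \<nu> A0 + val \<nu> (sh N B0))"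
      using val_union[OF _ _ disj] A0(1) S by (simp add: bclopen_iff)
    also have "val \<nu> (sh N B0) = val \<nu> B0" by (rule val_equidec[OF B0(1) sh_ed[OF B0(1)]])
    also have "ennreal (val \<nu> A0 + val \<nu> B0) = ennreal (val \<nu> A0) + ennreal (val \<nu> B0)"
      using val_nn by (simp add: ennreal_plus)
    finally show ?thesis using mu_tcls A0 B0 by simp
  qed
  moreover have "mu (tcls \<alpha> (UNIV \<times> {0})) = 1"
  proof -
    have "val \<nu> (UNIV \<times> {0}) = \<nu> UNIV" unfolding val_def sl_def by simp
    then show ?thesis using mu_tcls[OF bclopen_level] one by simp
  qed
  ultimately show ?thesis unfolding Mstates_def tstate_def by blast
qed

lemma mu_zero:
  assumes B0: "bclopen B0" and S: "\<nu> {x. \<exists>n. (x, n) \<in> B0} = 0"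
  shows "mu (tcls \<alpha> B0) = 0"
proof -
  have "\<nu> (sl n B0) = 0" for n
  proof -
    have "\<nu> (sl n B0) \<le> \<nu> {x. \<exists>n. (x, n) \<in> B0}" by (rule nu_mono) (auto simp: sl_def)
    then show ?thesis using S nn[of "sl n B0"] by simp
  qed
  then have "val \<nu> B0 = 0" unfolding val_def by simp
  then show ?thesis using mu_tcls[OF B0] by simp
qed

end



theorem lemmal:
  fixes \<alpha> :: "'g::{group_add, countable} \<Rightarrow> 'x::t2_space \<Rightarrow> 'x"
    and b :: "('x \<times> nat) set set"
  assumes "amenable_group TYPE('g)"
    and "group_action \<alpha>"
    and "compact (UNIV :: 'x set)"
    and "zero_dimensional TYPE('x)"
    and "b \<in> Tsg \<alpha>"
  shows "order_unit \<alpha> b \<longleftrightarrow> (\<forall>\<mu>\<in>Mstates \<alpha>. \<mu> b > 0)"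
proof -
  interpret tsetting \<alpha> using assms(2,3) by (rule tsetting.intro)
  obtain B0 where B0: "bclopen B0" "b = tcls \<alpha> B0" using assms(5) unfolding Tsg_def by blast
  show ?thesis
  proof
    assume "order_unit \<alpha> b"
    then show "\<forall>\<mu>\<in>Mstates \<alpha>. \<mu> b > 0" using ou_pos[OF B0(1)] B0(2) by auto
  next
    assume pos: "\<forall>\<mu>\<in>Mstates \<alpha>. \<mu> b > 0"
    show "order_unit \<alpha> b"
    proof (cases "\<forall>x. \<exists>g n. (\<alpha> g x, n) \<in> B0")
      case True
      then show ?thesis using cover_ou[OF B0(1)] B0(2) by simp
    next
      case False
      then obtain z where z: "\<And>g n. (\<alpha> g z, n) \<notin> B0" by blast
      define S where "S = {x. \<exists>n. (x, n) \<in> B0}"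
      have zS: "\<And>g. \<alpha> g z \<notin> S" using z unfolding S_def by blast
      obtain \<nu> :: "'x set \<Rightarrow> real" where nu: "\<And>C. \<nu> C \<ge> 0" "\<nu> UNIV = 1"
        "\<And>C D. C \<inter> D = {} \<Longrightarrow> \<nu> (C \<union> D) = \<nu> C + \<nu> D" "\<And>g C. \<nu> (\<alpha> g ` C) = \<nu> C" "\<nu> S = 0"
        using inv_mean[OF assms(1,2) zS] by blast
      interpret m: msetting \<alpha> \<nu>
        by (intro msetting.intro msetting_axioms.intro tsetting.intro assms(2,3) nu(1-4))
      have "m.mu \<in> Mstates \<alpha>" by (rule m.mu_state)
      moreover have "m.mu b = 0" using m.mu_zero[OF B0(1)] nu(5) B0(2) unfolding S_def by simp
      ultimately show ?thesis using pos by fastforce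
    qed
  qed
qed



end
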